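(* Let $\alpha\in\ell^2$. For every $p\in(1,\infty)$ there exists a constant $C_p>0$ depending only on $p$ such that $$\|(a_k(R_\alpha))_{k\ge1}\|_{\ell^p}\le C_p\Big(\sum_{k\ge-1}|\sigma_k|^p\Big)^{1/p}.$$
   Context: $\mathbb{N}=\{0,1,2,\dots\}$; $(R_\alpha f)(k)=\alpha_k\sum_{j=0}^kf(j)$ on $\ell^2$ (square-summable functions $\mathbb{N}\to\mathbb{C}$). $\sigma_{-1}=|\alpha_0|$ and $\sigma_k=(\sum_{j=2^k}^{2^{k+1}-1}(j+1)|\alpha_j|^2)^{1/2}$ for $k\in\mathbb{N}$. Approximation numbers: $a_{n+1}(T)=\inf\{\|T-P\|:P$ linear with rank $\le n\}$, $n\ge0$. *)

theory Defs
  imports "HOL-Analysis.Analysis"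
begin

definition l2 :: "(nat \<Rightarrow> complex) set" where
  "l2 = {f. summable (\<lambda>k. (cmod (f k))\<^sup>2)}"

definition l2norm :: "(nat \<Rightarrow> complex) \<Rightarrow> ereal" where
  "l2norm f = (if f \<in> l2 then ereal (sqrt (\<Sum>k. (cmod (f k))\<^sup>2)) else \<infinity>)"

definition opnorm :: "((nat \<Rightarrow> complex) \<Rightarrow> (nat \<Rightarrow> complex)) \<Rightarrow> ereal" where
  "opnorm T = (SUP f\<in>{f\<in>l2. l2norm f \<le> 1}. l2norm (T f))"

definition lin_rank_le :: "nat \<Rightarrow> ((nat \<Rightarrow> complex) \<Rightarrow> (nat \<Rightarrow> complex)) \<Rightarrow> bool" where
  "lin_rank_le n P \<longleftrightarrow>
     (\<forall>f\<in>l2. P f \<in> l2) \<and>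
     (\<forall>f\<in>l2. \<forall>g\<in>l2. \<forall>a b::complex.
        P (\<lambda>k. a * f k + b * g k) = (\<lambda>k. a * P f k + b * P g k)) \<and>
     (\<exists>v::nat \<Rightarrow> nat \<Rightarrow> complex. \<forall>f\<in>l2. \<exists>c::nat \<Rightarrow> complex.
        P f = (\<lambda>k. \<Sum>i<n. c i * v i k))"

text \<open>approx_num T n is the approximation number a_(n+1)(T), n >= 0.\<close>
definition approx_num :: "((nat \<Rightarrow> complex) \<Rightarrow> (nat \<Rightarrow> complex)) \<Rightarrow> nat \<Rightarrow> ereal" where
  "approx_num T n = (INF P\<in>{P. lin_rank_le n P}. opnorm (\<lambda>f k. T f k - P f k))"

definition R_op :: "(nat \<Rightarrow> complex) \<Rightarrow> (nat \<Rightarrow> complex) \<Rightarrow> (nat \<Rightarrow> complex)" where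
  "R_op \<alpha> f = (\<lambda>k. \<alpha> k * (\<Sum>j\<le>k. f j))"

text \<open>sig alpha m = sigma_(m-1): sig alpha 0 = sigma_(-1) = |alpha_0|, sig alpha (Suc k) = sigma_k.\<close>
fun sig :: "(nat \<Rightarrow> complex) \<Rightarrow> nat \<Rightarrow> real" where
  "sig \<alpha> 0 = cmod (\<alpha> 0)"
| "sig \<alpha> (Suc k) = sqrt (\<Sum>j\<in>{2^k..<2^(k+1)}. real (j+1) * (cmod (\<alpha> j))\<^sup>2)"

end

theory Submission
  imports Defs
begin
lemma l2_iff: "f \<in> l2 \<longleftrightarrow> summable (\<lambda>k. (cmod (f k))\<^sup>2)" by (simp add: l2_def)

lemma l2norm_nonneg: "0 \<le> l2norm f"
  by (auto simp: l2norm_def l2_def intro!: suminf_nonneg)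

lemma zero_l2: "(\<lambda>k. 0) \<in> l2" by (simp add: l2_def)

lemma opnorm_nonneg: "0 \<le> opnorm T"
proof -
  have "(\<lambda>k. 0) \<in> {f\<in>l2. l2norm f \<le> 1}" by (simp add: zero_l2 l2norm_def l2_def)
  then show ?thesis unfolding opnorm_def by (rule SUP_upper2) (rule l2norm_nonneg)
qed

lemma approx_num_nonneg: "0 \<le> approx_num T n"
  unfolding approx_num_def by (rule INF_greatest) (rule opnorm_nonneg)

lemma approx_num_le: "lin_rank_le n P \<Longrightarrow> approx_num T n \<le> opnorm (\<lambda>f k. T f k - P f k)"
  unfolding approx_num_def by (rule INF_lower) simp

lemma opnorm_le:
  assumes "B \<ge> 0" and "\<And>f. f \<in> l2 \<Longrightarrow> (\<Sum>k. (cmod (f k))\<^sup>2) \<le> 1 \<Longrightarrow>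
      T f \<in> l2 \<and> (\<Sum>k. (cmod (T f k))\<^sup>2) \<le> B\<^sup>2"
  shows "opnorm T \<le> ereal B"
  unfolding opnorm_def
proof (rule SUP_least)
  fix f assume f: "f \<in> {f\<in>l2. l2norm f \<le> 1}"
  then have fl: "f \<in> l2" and "ereal (sqrt (\<Sum>k. (cmod (f k))\<^sup>2)) \<le> 1"
    by (auto simp: l2norm_def)
  then have "sqrt (\<Sum>k. (cmod (f k))\<^sup>2) \<le> 1" by simp
  then have "(\<Sum>k. (cmod (f k))\<^sup>2) \<le> 1" by simp
  from assms(2)[OF fl this] have "T f \<in> l2" "(\<Sum>k. (cmod (T f k))\<^sup>2) \<le> B\<^sup>2" by auto
  then show "l2norm (T f) \<le> ereal B" using assms(1)
    by (simp add: l2norm_def real_le_lsqrt)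
qed

lemma lin_rank_le_mono:
  assumes "lin_rank_le m P" "m \<le> n" shows "lin_rank_le n P"
proof -
  from assms(1) obtain v where v: "\<forall>f\<in>l2. \<exists>c::nat \<Rightarrow> complex. P f = (\<lambda>k. \<Sum>i<m. c i * v i k)"
    unfolding lin_rank_le_def by blast
  have "\<forall>f\<in>l2. \<exists>c::nat \<Rightarrow> complex. P f = (\<lambda>k. \<Sum>i<n. c i * v i k)"
  proof
    fix f assume "f \<in> l2"
    then obtain c where c: "P f = (\<lambda>k. \<Sum>i<m. c i * v i k)" using v by blast
    define c' where "c' i = (if i < m then c i else 0)" for i
    have "(\<Sum>i<n. c' i * v i k) = (\<Sum>i<m. c i * v i k)" for k
    proof -
      have "(\<Sum>i<n. c' i * v i k) = (\<Sum>i<m. c' i * v i k)"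
        by (rule sum.mono_neutral_right) (use assms(2) in \<open>auto simp: c'_def\<close>)
      also have "\<dots> = (\<Sum>i<m. c i * v i k)" by (simp add: c'_def)
      finally show ?thesis .
    qed
    then show "\<exists>c::nat \<Rightarrow> complex. P f = (\<lambda>k. \<Sum>i<n. c i * v i k)" using c by (intro exI[of _ c']) auto
  qed
  then show ?thesis using assms(1) unfolding lin_rank_le_def by blast
qed

definition Pg :: "(nat \<Rightarrow> complex) \<Rightarrow> (nat \<Rightarrow> nat) \<Rightarrow> (nat \<Rightarrow> complex) \<Rightarrow> nat \<Rightarrow> complex" where
  "Pg \<alpha> g f = (\<lambda>k. \<alpha> k * (\<Sum>j<g k. f j))"

lemma Pg_rank:
  assumes a: "\<alpha> \<in> l2" and fin: "finite (g ` UNIV)" and cd: "card (g ` UNIV - {0}) \<le> n"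
  shows "lin_rank_le n (Pg \<alpha> g)"
proof -
  define W where "W = g ` UNIV - {0}"
  have fW: "finite W" using fin by (simp add: W_def)
  obtain e where e: "bij_betw e {0..<card W} W" using ex_bij_betw_nat_finite[OF fW] by blast
  have l2p: "Pg \<alpha> g f \<in> l2" if f: "f \<in> l2" for f
  proof -
    define M where "M = Max ((\<lambda>v. cmod (\<Sum>j<v. f j)) ` g ` UNIV)"
    have le: "cmod (\<Sum>j<g k. f j) \<le> M" for k
      unfolding M_def by (rule Max_ge) (use fin in auto)
    have bnd: "(cmod (Pg \<alpha> g f k))\<^sup>2 \<le> M\<^sup>2 * (cmod (\<alpha> k))\<^sup>2" for k
    proof -
      have "cmod (Pg \<alpha> g f k) \<le> cmod (\<alpha> k) * M"
        unfolding Pg_def by (simp add: norm_mult mult_left_mono le)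
      then have "(cmod (Pg \<alpha> g f k))\<^sup>2 \<le> (cmod (\<alpha> k) * M)\<^sup>2"
        by (rule power_mono) simp
      then show ?thesis by (simp add: power_mult_distrib mult.commute)
    qed
    have sm: "summable (\<lambda>k. M\<^sup>2 * (cmod (\<alpha> k))\<^sup>2)"
      using a by (intro summable_mult) (simp add: l2_def)
    show ?thesis unfolding l2_def mem_Collect_eq
    proof (rule summable_comparison_test'[OF sm])
      fix k show "norm ((cmod (Pg \<alpha> g f k))\<^sup>2) \<le> M\<^sup>2 * (cmod (\<alpha> k))\<^sup>2"
        using bnd[of k] by simp
    qed
  qed
  have lin: "Pg \<alpha> g (\<lambda>k. a * f k + b * h k) = (\<lambda>k. a * Pg \<alpha> g f k + b * Pg \<alpha> g h k)" for a b f h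
    unfolding Pg_def by (auto simp: sum.distrib sum_distrib_left algebra_simps)
  define v where "v i k = (if i < card W \<and> g k = e i then \<alpha> k else 0)" for i k
  have rep: "Pg \<alpha> g f = (\<lambda>k. \<Sum>i<n. (\<Sum>j<e i. f j) * v i k)" for f
  proof
    fix k
    show "Pg \<alpha> g f k = (\<Sum>i<n. (\<Sum>j<e i. f j) * v i k)"
    proof (cases "g k = 0")
      case True
      have "v i k = 0" for i
        using True e unfolding v_def W_def bij_betw_def by auto
      then show ?thesis using True by (simp add: Pg_def)
    next
      case False
      then have "g k \<in> W" by (simp add: W_def)
      then obtain i0 where i0: "i0 < card W" "e i0 = g k" using e unfolding bij_betw_def
        by (metis atLeastLessThan_iff imageE)
      have iff: "(i < card W \<and> g k = e i) \<longleftrightarrow> i = i0" for i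
        using e i0 unfolding bij_betw_def inj_on_def by auto
      have "(\<Sum>i<n. (\<Sum>j<e i. f j) * v i k) = (\<Sum>i<n. if i = i0 then (\<Sum>j<e i. f j) * \<alpha> k else 0)"
        by (rule sum.cong) (auto simp: v_def iff)
      also have "\<dots> = (\<Sum>j<e i0. f j) * \<alpha> k" using i0 cd by (simp add: W_def)
      finally show ?thesis using i0 by (simp add: Pg_def mult.commute)
    qed
  qed
  show ?thesis unfolding lin_rank_le_def
  proof (intro conjI ballI allI)
    show "\<exists>v. \<forall>f\<in>l2. \<exists>c. Pg \<alpha> g f = (\<lambda>k. \<Sum>i<n. c i * v i k)"
    proof (rule exI[of _ v], intro ballI)
      fix f :: "nat \<Rightarrow> complex"
      show "\<exists>c. Pg \<alpha> g f = (\<lambda>k. \<Sum>i<n. c i * v i k)"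
        using rep[of f] by (intro exI[of _ "\<lambda>i. \<Sum>j<e i. f j"]) simp
    qed
  qed (use l2p lin in auto)
qed

definition Wt :: "(nat \<Rightarrow> nat) \<Rightarrow> nat \<Rightarrow> real" where
  "Wt g k = (\<Sum>i\<in>{g k..k}. 1 / sqrt (real i + 1))"

lemma cs_weighted:
  fixes f :: "nat \<Rightarrow> complex"
  shows "(cmod (\<Sum>j\<in>S. f j))\<^sup>2 \<le> (\<Sum>j\<in>S. 1 / sqrt (real j + 1)) * (\<Sum>j\<in>S. sqrt (real j + 1) * (cmod (f j))\<^sup>2)"
proof -
  have "cmod (\<Sum>j\<in>S. f j) \<le> (\<Sum>j\<in>S. cmod (f j))" by (rule norm_sum)
  then have "(cmod (\<Sum>j\<in>S. f j))\<^sup>2 \<le> (\<Sum>j\<in>S. cmod (f j))\<^sup>2" by (rule power_mono) simp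
  also have "(\<Sum>j\<in>S. cmod (f j)) = (\<Sum>j\<in>S. sqrt (1 / sqrt (real j + 1)) * (sqrt (sqrt (real j + 1)) * cmod (f j)))"
  proof (rule sum.cong[OF refl])
    fix j
    have "sqrt (1 / sqrt (real j + 1)) * sqrt (sqrt (real j + 1)) = 1"
      by (simp add: real_sqrt_divide)
    then show "cmod (f j) = sqrt (1 / sqrt (real j + 1)) * (sqrt (sqrt (real j + 1)) * cmod (f j))"
      by (metis mult.assoc mult_1)
  qed
  also have "(\<Sum>j\<in>S. sqrt (1 / sqrt (real j + 1)) * (sqrt (sqrt (real j + 1)) * cmod (f j)))\<^sup>2
     \<le> (\<Sum>j\<in>S. (sqrt (1 / sqrt (real j + 1)))\<^sup>2) * (\<Sum>j\<in>S. (sqrt (sqrt (real j + 1)) * cmod (f j))\<^sup>2)"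
    by (rule Cauchy_Schwarz_ineq_sum)
  also have "\<dots> = (\<Sum>j\<in>S. 1 / sqrt (real j + 1)) * (\<Sum>j\<in>S. sqrt (real j + 1) * (cmod (f j))\<^sup>2)"
    by (simp add: power_mult_distrib)
  finally show ?thesis .
qed

lemma schur_finite:
  fixes \<alpha> f :: "nat \<Rightarrow> complex" and g :: "nat \<Rightarrow> nat"
  assumes H: "\<And>j. sqrt (real j + 1) * (\<Sum>k\<in>{k. k<K \<and> g k \<le> j \<and> j \<le> k}. (cmod (\<alpha> k))\<^sup>2 * Wt g k) \<le> D"
  shows "(\<Sum>k<K. (cmod (\<alpha> k * (\<Sum>j\<in>{g k..k}. f j)))\<^sup>2) \<le> D * (\<Sum>j<K. (cmod (f j))\<^sup>2)"
proof -
  have "(\<Sum>k<K. (cmod (\<alpha> k * (\<Sum>j\<in>{g k..k}. f j)))\<^sup>2)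
      \<le> (\<Sum>k<K. (cmod (\<alpha> k))\<^sup>2 * (Wt g k * (\<Sum>j\<in>{g k..k}. sqrt (real j + 1) * (cmod (f j))\<^sup>2)))"
    by (rule sum_mono) (simp add: norm_mult power_mult_distrib Wt_def mult_left_mono cs_weighted)
  also have "\<dots> = (\<Sum>k<K. \<Sum>j<K. if g k \<le> j \<and> j \<le> k then (cmod (\<alpha> k))\<^sup>2 * Wt g k * (sqrt (real j + 1) * (cmod (f j))\<^sup>2) else 0)"
  proof (rule sum.cong[OF refl])
    fix k assume "k \<in> {..<K}"
    then have eq: "{j\<in>{..<K}. g k \<le> j \<and> j \<le> k} = {g k..k}" by auto
    have "(\<Sum>j<K. if g k \<le> j \<and> j \<le> k then (cmod (\<alpha> k))\<^sup>2 * Wt g k * (sqrt (real j + 1) * (cmod (f j))\<^sup>2) else 0)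
        = (\<Sum>j\<in>{j\<in>{..<K}. g k \<le> j \<and> j \<le> k}. (cmod (\<alpha> k))\<^sup>2 * Wt g k * (sqrt (real j + 1) * (cmod (f j))\<^sup>2))"
      by (rule sum.inter_filter[symmetric]) simp
    also have "\<dots> = (cmod (\<alpha> k))\<^sup>2 * (Wt g k * (\<Sum>j\<in>{g k..k}. sqrt (real j + 1) * (cmod (f j))\<^sup>2))"
      unfolding eq by (simp add: sum_distrib_left mult.assoc)
    finally show "(cmod (\<alpha> k))\<^sup>2 * (Wt g k * (\<Sum>j\<in>{g k..k}. sqrt (real j + 1) * (cmod (f j))\<^sup>2)) =
      (\<Sum>j<K. if g k \<le> j \<and> j \<le> k then (cmod (\<alpha> k))\<^sup>2 * Wt g k * (sqrt (real j + 1) * (cmod (f j))\<^sup>2) else 0)" ..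
  qed
  also have "\<dots> = (\<Sum>j<K. \<Sum>k<K. if g k \<le> j \<and> j \<le> k then (cmod (\<alpha> k))\<^sup>2 * Wt g k * (sqrt (real j + 1) * (cmod (f j))\<^sup>2) else 0)"
    by (rule sum.swap)
  also have "\<dots> = (\<Sum>j<K. (cmod (f j))\<^sup>2 * (sqrt (real j + 1) * (\<Sum>k\<in>{k. k<K \<and> g k \<le> j \<and> j \<le> k}. (cmod (\<alpha> k))\<^sup>2 * Wt g k)))"
  proof (rule sum.cong[OF refl])
    fix j
    have eq: "{k\<in>{..<K}. g k \<le> j \<and> j \<le> k} = {k. k<K \<and> g k \<le> j \<and> j \<le> k}" by auto
    have "(\<Sum>k<K. if g k \<le> j \<and> j \<le> k then (cmod (\<alpha> k))\<^sup>2 * Wt g k * (sqrt (real j + 1) * (cmod (f j))\<^sup>2) else 0)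
       = (\<Sum>k\<in>{k\<in>{..<K}. g k \<le> j \<and> j \<le> k}. (cmod (\<alpha> k))\<^sup>2 * Wt g k * (sqrt (real j + 1) * (cmod (f j))\<^sup>2))"
      by (rule sum.inter_filter[symmetric]) simp
    also have "\<dots> = (cmod (f j))\<^sup>2 * (sqrt (real j + 1) * (\<Sum>k\<in>{k. k<K \<and> g k \<le> j \<and> j \<le> k}. (cmod (\<alpha> k))\<^sup>2 * Wt g k))"
      unfolding eq by (simp add: sum_distrib_left sum_distrib_right mult_ac)
    finally show "(\<Sum>k<K. if g k \<le> j \<and> j \<le> k then (cmod (\<alpha> k))\<^sup>2 * Wt g k * (sqrt (real j + 1) * (cmod (f j))\<^sup>2) else 0)
       = (cmod (f j))\<^sup>2 * (sqrt (real j + 1) * (\<Sum>k\<in>{k. k<K \<and> g k \<le> j \<and> j \<le> k}. (cmod (\<alpha> k))\<^sup>2 * Wt g k))" .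
  qed
  also have "\<dots> \<le> (\<Sum>j<K. (cmod (f j))\<^sup>2 * D)"
    by (rule sum_mono) (simp add: mult_left_mono H)
  also have "\<dots> = D * (\<Sum>j<K. (cmod (f j))\<^sup>2)" by (simp add: sum_distrib_left mult.commute)
  finally show ?thesis .
qed

lemma schur_l2:
  fixes \<alpha> f :: "nat \<Rightarrow> complex" and g :: "nat \<Rightarrow> nat"
  assumes H: "\<And>j K. sqrt (real j + 1) * (\<Sum>k\<in>{k. k<K \<and> g k \<le> j \<and> j \<le> k}. (cmod (\<alpha> k))\<^sup>2 * Wt g k) \<le> D"
    and f: "f \<in> l2"
  shows "(\<lambda>k. \<alpha> k * (\<Sum>j\<in>{g k..k}. f j)) \<in> l2 \<and>
         (\<Sum>k. (cmod (\<alpha> k * (\<Sum>j\<in>{g k..k}. f j)))\<^sup>2) \<le> D * (\<Sum>j. (cmod (f j))\<^sup>2)"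
proof -
  have D0: "0 \<le> D" using H[of 0 0] by simp
  have sf: "summable (\<lambda>j. (cmod (f j))\<^sup>2)" using f by (simp add: l2_def)
  have bnd: "(\<Sum>k<K. (cmod (\<alpha> k * (\<Sum>j\<in>{g k..k}. f j)))\<^sup>2) \<le> D * (\<Sum>j. (cmod (f j))\<^sup>2)" for K
  proof -
    have "(\<Sum>k<K. (cmod (\<alpha> k * (\<Sum>j\<in>{g k..k}. f j)))\<^sup>2) \<le> D * (\<Sum>j<K. (cmod (f j))\<^sup>2)"
      by (rule schur_finite) (rule H)
    also have "\<dots> \<le> D * (\<Sum>j. (cmod (f j))\<^sup>2)"
      using D0 sf by (intro mult_left_mono sum_le_suminf) auto
    finally show ?thesis .
  qed
  have sm: "summable (\<lambda>k. (cmod (\<alpha> k * (\<Sum>j\<in>{g k..k}. f j)))\<^sup>2)"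
    by (rule summableI_nonneg_bounded[OF _ bnd]) simp
  then show ?thesis using bnd by (auto simp: l2_def intro: suminf_le_const)
qed

lemma sum_split_anchor:
  fixes f :: "nat \<Rightarrow> complex"
  assumes "a \<le> Suc k"
  shows "(\<Sum>j\<le>k. f j) - (\<Sum>j<a. f j) = (\<Sum>j\<in>{a..k}. f j)"
proof -
  have "{..k} = {..<a} \<union> {a..k}" using assms by auto
  then have "(\<Sum>j\<le>k. f j) = (\<Sum>j<a. f j) + (\<Sum>j\<in>{a..k}. f j)"
    by (simp add: sum.union_disjoint ivl_disj_int)
  then show ?thesis by simp
qed

lemma opnorm_err:
  fixes \<alpha> :: "nat \<Rightarrow> complex" and g :: "nat \<Rightarrow> nat"
  assumes g: "\<And>k. g k \<le> Suc k"
    and H: "\<And>j K. sqrt (real j + 1) * (\<Sum>k\<in>{k. k<K \<and> g k \<le> j \<and> j \<le> k}. (cmod (\<alpha> k))\<^sup>2 * Wt g k) \<le> D"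
  shows "opnorm (\<lambda>f k. R_op \<alpha> f k - Pg \<alpha> g f k) \<le> ereal (sqrt D)"
proof (rule opnorm_le)
  show "0 \<le> sqrt D" using H[of 0 0] by simp
next
  fix f :: "nat \<Rightarrow> complex" assume f: "f \<in> l2" and f1: "(\<Sum>k. (cmod (f k))\<^sup>2) \<le> 1"
  have eq: "(\<lambda>k. R_op \<alpha> f k - Pg \<alpha> g f k) = (\<lambda>k. \<alpha> k * (\<Sum>j\<in>{g k..k}. f j))"
  proof
    fix k show "R_op \<alpha> f k - Pg \<alpha> g f k = \<alpha> k * (\<Sum>j\<in>{g k..k}. f j)"
      unfolding R_op_def Pg_def using sum_split_anchor[OF g[of k], of f]
      by (metis right_diff_distrib)
  qed
  have D0: "0 \<le> D" using H[of 0 0] by simp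
  from schur_l2[OF H f] have A: "(\<lambda>k. \<alpha> k * (\<Sum>j\<in>{g k..k}. f j)) \<in> l2"
    and B: "(\<Sum>k. (cmod (\<alpha> k * (\<Sum>j\<in>{g k..k}. f j)))\<^sup>2) \<le> D * (\<Sum>j. (cmod (f j))\<^sup>2)" by auto
  have "D * (\<Sum>j. (cmod (f j))\<^sup>2) \<le> D" using D0 f1 by (simp add: mult_left_le)
  then show "(\<lambda>k. R_op \<alpha> f k - Pg \<alpha> g f k) \<in> l2 \<and>
        (\<Sum>k. (cmod (R_op \<alpha> f k - Pg \<alpha> g f k))\<^sup>2) \<le> (sqrt D)\<^sup>2"
    using A B D0 eq by (simp add: fun_eq_iff)
qed

definition lo :: "nat \<Rightarrow> nat" where "lo i = 2^i div 2"
definition Bk :: "nat \<Rightarrow> nat set" where "Bk i = {lo i..<2^i}"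
definition blk :: "nat \<Rightarrow> nat" where "blk k = (LEAST i. k < 2^i)"

lemma lo_0[simp]: "lo 0 = 0" by (simp add: lo_def)
lemma lo_Suc[simp]: "lo (Suc i) = 2^i" by (simp add: lo_def)

lemma lo_less: "lo i < 2^i" by (cases i) auto
lemma lo_bound1: "2^i \<le> 2 * (lo i + 1)" by (cases i) auto
lemma lo_bound2: "2^i - lo i \<le> lo i + 1" by (cases i) auto

lemma finite_Bk[simp]: "finite (Bk i)" by (simp add: Bk_def)

lemma blk_less: "k < 2 ^ blk k"
  unfolding blk_def by (rule LeastI[of _ k]) (rule less_exp)

lemma blk_mem: "k \<in> Bk (blk k)"
proof (cases "blk k")
  case 0 then show ?thesis using blk_less[of k] by (simp add: Bk_def)
next
  case (Suc m)
  have "\<not> k < 2^m" using Suc unfolding blk_def by (metis lessI not_less_Least)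
  then show ?thesis using blk_less[of k] Suc by (simp add: Bk_def)
qed

lemma blk_le: "k < 2^i \<Longrightarrow> blk k \<le> i"
  unfolding blk_def by (rule Least_le)

lemma blk_unique: assumes "k \<in> Bk i" shows "blk k = i"
proof -
  have k: "lo i \<le> k" "k < 2^i" using assms by (auto simp: Bk_def)
  have le: "blk k \<le> i" using blk_le[OF k(2)] .
  show ?thesis
  proof (rule ccontr)
    assume "blk k \<noteq> i"
    then have "blk k < i" using le by simp
    then obtain m where i: "i = Suc m" and "blk k \<le> m" by (cases i) auto
    then have p: "(2::nat) ^ blk k \<le> 2^m" by (simp add: power_increasing)
    have "lo i = 2^m" by (simp add: i)
    then show False using blk_less[of k] k(1) p by linarith
  qed
qed

lemma blk_mono: "k \<le> k' \<Longrightarrow> blk k \<le> blk k'"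
  using blk_le blk_less by (meson le_less_trans)

lemma sig_eq: "sig \<alpha> i = sqrt (\<Sum>k\<in>Bk i. real (k + 1) * (cmod (\<alpha> k))\<^sup>2)"
proof (cases i)
  case 0 then show ?thesis by (simp add: Bk_def)
next
  case (Suc m) then show ?thesis by (simp add: Bk_def)
qed

lemma sig_nonneg: "0 \<le> sig \<alpha> i"
  unfolding sig_eq by (intro real_sqrt_ge_zero sum_nonneg) simp

lemma sig_sq: "(sig \<alpha> i)\<^sup>2 = (\<Sum>k\<in>Bk i. real (k + 1) * (cmod (\<alpha> k))\<^sup>2)"
  unfolding sig_eq by (rule real_sqrt_pow2) (rule sum_nonneg, simp)

definition Am :: "(nat \<Rightarrow> complex) \<Rightarrow> nat \<Rightarrow> real" where
  "Am \<alpha> i = (\<Sum>k\<in>Bk i. (cmod (\<alpha> k))\<^sup>2)"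
definition Phi :: "(nat \<Rightarrow> complex) \<Rightarrow> nat \<Rightarrow> nat \<Rightarrow> real" where
  "Phi \<alpha> i k = (\<Sum>l\<in>{lo i..<k}. (cmod (\<alpha> l))\<^sup>2)"
definition Nb :: "nat \<Rightarrow> real" where "Nb i = real (2^i - lo i)"
definition Th :: "(nat \<Rightarrow> complex) \<Rightarrow> real \<Rightarrow> nat \<Rightarrow> nat \<Rightarrow> real" where
  "Th \<alpha> t i k = (Phi \<alpha> i k / Am \<alpha> i + (real k - real (lo i)) / Nb i) * sig \<alpha> i / t"
definition aa :: "(nat \<Rightarrow> complex) \<Rightarrow> real \<Rightarrow> nat \<Rightarrow> nat \<Rightarrow> int" where
  "aa \<alpha> t i k = \<lfloor>Th \<alpha> t i k\<rfloor>"
definition ks :: "(nat \<Rightarrow> complex) \<Rightarrow> real \<Rightarrow> nat \<Rightarrow> nat \<Rightarrow> int" where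
  "ks \<alpha> t i k = aa \<alpha> t i k + aa \<alpha> t i (Suc k)"
definition big :: "(nat \<Rightarrow> complex) \<Rightarrow> real \<Rightarrow> nat \<Rightarrow> bool" where
  "big \<alpha> t i \<longleftrightarrow> t < 4 * sig \<alpha> i"
definition anc :: "(nat \<Rightarrow> complex) \<Rightarrow> real \<Rightarrow> nat \<Rightarrow> nat" where
  "anc \<alpha> t k = (if \<not> big \<alpha> t (blk k) then 0
     else if aa \<alpha> t (blk k) k \<noteq> aa \<alpha> t (blk k) (Suc k) then Suc k
     else (LEAST l. l \<in> Bk (blk k) \<and> ks \<alpha> t (blk k) l = ks \<alpha> t (blk k) k))"

lemma Nb_pos: "0 < Nb i" using lo_less[of i] by (simp add: Nb_def)
lemma Nb_le: "Nb i \<le> real (lo i) + 1" using lo_bound2[of i] unfolding Nb_def by linarith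
lemma Am_nonneg: "0 \<le> Am \<alpha> i" unfolding Am_def by (rule sum_nonneg) simp
lemma Phi_nonneg: "0 \<le> Phi \<alpha> i k" unfolding Phi_def by (rule sum_nonneg) simp

lemma Phi_mono: "k \<le> k' \<Longrightarrow> Phi \<alpha> i k \<le> Phi \<alpha> i k'"
  unfolding Phi_def by (rule sum_mono2) auto

lemma Phi_diff: "lo i \<le> a \<Longrightarrow> a \<le> b \<Longrightarrow> Phi \<alpha> i b - Phi \<alpha> i a = (\<Sum>l\<in>{a..<b}. (cmod (\<alpha> l))\<^sup>2)"
  unfolding Phi_def using sum.atLeastLessThan_concat[of "lo i" a b "\<lambda>l. (cmod (\<alpha> l))\<^sup>2"] by simp

lemma Phi_top: "Phi \<alpha> i (2^i) = Am \<alpha> i" by (simp add: Phi_def Am_def Bk_def)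

lemma Th_mono:
  assumes t: "0 < t" and kk: "k \<le> k'"
  shows "Th \<alpha> t i k \<le> Th \<alpha> t i k'"
proof -
  have "Phi \<alpha> i k / Am \<alpha> i + (real k - real (lo i)) / Nb i \<le> Phi \<alpha> i k' / Am \<alpha> i + (real k' - real (lo i)) / Nb i"
    using Phi_mono[OF kk, of \<alpha> i] Am_nonneg[of \<alpha> i] Nb_pos[of i] kk
    by (intro add_mono divide_right_mono) auto
  then show ?thesis unfolding Th_def using t sig_nonneg[of \<alpha> i]
    by (intro divide_right_mono mult_right_mono) auto
qed

lemma aa_mono: "0 < t \<Longrightarrow> k \<le> k' \<Longrightarrow> aa \<alpha> t i k \<le> aa \<alpha> t i k'"
  unfolding aa_def by (intro floor_mono Th_mono)

lemma ks_mono: "0 < t \<Longrightarrow> k \<le> k' \<Longrightarrow> ks \<alpha> t i k \<le> ks \<alpha> t i k'"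
  unfolding ks_def by (intro add_mono aa_mono) auto

lemma chain:
  assumes t: "0 < t" and lk: "l < k" and eq: "ks \<alpha> t i l = ks \<alpha> t i k"
  shows "aa \<alpha> t i l = aa \<alpha> t i (Suc k) \<and> aa \<alpha> t i k = aa \<alpha> t i (Suc k) \<and> aa \<alpha> t i l = aa \<alpha> t i (Suc l)"
proof -
  have 1: "aa \<alpha> t i l \<le> aa \<alpha> t i (Suc l)" by (rule aa_mono[OF t]) simp
  have 2: "aa \<alpha> t i (Suc l) \<le> aa \<alpha> t i k" by (rule aa_mono[OF t]) (use lk in simp)
  have 3: "aa \<alpha> t i k \<le> aa \<alpha> t i (Suc k)" by (rule aa_mono[OF t]) simp
  show ?thesis using 1 2 3 eq unfolding ks_def by linarith
qed

lemma sig_sq_le: "(sig \<alpha> i)\<^sup>2 \<le> 2^i * Am \<alpha> i"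
proof -
  have "(sig \<alpha> i)\<^sup>2 = (\<Sum>k\<in>Bk i. real (k + 1) * (cmod (\<alpha> k))\<^sup>2)" by (rule sig_sq)
  also have "\<dots> \<le> (\<Sum>k\<in>Bk i. 2^i * (cmod (\<alpha> k))\<^sup>2)"
  proof (rule sum_mono)
    fix k assume "k \<in> Bk i"
    then have "k + 1 \<le> 2^i" by (simp add: Bk_def)
    then have "real (k + 1) \<le> real (2^i)" by (simp only: of_nat_le_iff)
    then have "real (k + 1) \<le> 2^i" by simp
    then show "real (k + 1) * (cmod (\<alpha> k))\<^sup>2 \<le> 2^i * (cmod (\<alpha> k))\<^sup>2" by (rule mult_right_mono) simp
  qed
  also have "\<dots> = 2^i * Am \<alpha> i" by (simp add: Am_def sum_distrib_left)
  finally show ?thesis .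
qed

lemma NbAm_le: "Nb i * Am \<alpha> i \<le> (sig \<alpha> i)\<^sup>2"
proof -
  have "Nb i * Am \<alpha> i = (\<Sum>k\<in>Bk i. Nb i * (cmod (\<alpha> k))\<^sup>2)" by (simp add: Am_def sum_distrib_left)
  also have "\<dots> \<le> (\<Sum>k\<in>Bk i. real (k + 1) * (cmod (\<alpha> k))\<^sup>2)"
  proof (rule sum_mono)
    fix k assume "k \<in> Bk i"
    then have "Nb i \<le> real (k + 1)" using Nb_le[of i] by (simp add: Bk_def)
    then show "Nb i * (cmod (\<alpha> k))\<^sup>2 \<le> real (k + 1) * (cmod (\<alpha> k))\<^sup>2" by (rule mult_right_mono) simp
  qed
  also have "\<dots> = (sig \<alpha> i)\<^sup>2" by (rule sig_sq[symmetric])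
  finally show ?thesis .
qed

lemma Am_pos: assumes "0 < sig \<alpha> i" shows "0 < Am \<alpha> i"
proof -
  have "0 < (sig \<alpha> i)\<^sup>2" using assms by simp
  then have "0 < 2^i * Am \<alpha> i" using sig_sq_le[of \<alpha> i] by linarith
  then show ?thesis by (simp add: zero_less_mult_iff)
qed

lemma big_sig: "0 < t \<Longrightarrow> big \<alpha> t i \<Longrightarrow> 0 < sig \<alpha> i"
  unfolding big_def by linarith

lemma anc_le: "anc \<alpha> t k \<le> Suc k"
proof -
  have "(LEAST l. l \<in> Bk (blk k) \<and> ks \<alpha> t (blk k) l = ks \<alpha> t (blk k) k) \<le> k"
    by (rule Least_le) (simp add: blk_mem)
  then show ?thesis unfolding anc_def by auto
qed

lemma anc_small: "\<not> big \<alpha> t (blk k) \<Longrightarrow> anc \<alpha> t k = 0"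
  unfolding anc_def by simp

lemma floor_eq_diff: "\<lfloor>x::real\<rfloor> = \<lfloor>y\<rfloor> \<Longrightarrow> y - x < 1"
  by linarith

lemma anc_cell:
  assumes t: "0 < t" and bg: "big \<alpha> t (blk k)" and aj: "anc \<alpha> t k \<le> j" and jk: "j \<le> k"
  shows "blk j = blk k \<and> lo (blk k) \<le> anc \<alpha> t k \<and>
    Th \<alpha> t (blk k) (Suc k) - Th \<alpha> t (blk k) j < 1 \<and>
    Th \<alpha> t (blk k) (Suc k) - Th \<alpha> t (blk k) (anc \<alpha> t k) < 1"
proof -
  define i where "i = blk k"
  define l where "l = (LEAST l. l \<in> Bk i \<and> ks \<alpha> t i l = ks \<alpha> t i k)"
  have nh: "aa \<alpha> t i k = aa \<alpha> t i (Suc k)"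
  proof (rule ccontr)
    assume "aa \<alpha> t i k \<noteq> aa \<alpha> t i (Suc k)"
    then have "anc \<alpha> t k = Suc k" using bg unfolding anc_def i_def by simp
    then show False using aj jk by simp
  qed
  have al: "anc \<alpha> t k = l" using bg nh unfolding anc_def i_def l_def by simp
  have lP: "l \<in> Bk i \<and> ks \<alpha> t i l = ks \<alpha> t i k"
    unfolding l_def by (rule LeastI[of _ k]) (simp add: i_def blk_mem)
  have lk: "l \<le> k" unfolding l_def by (rule Least_le) (simp add: i_def blk_mem)
  have key: "aa \<alpha> t i m = aa \<alpha> t i (Suc k)" if "m \<le> k" "ks \<alpha> t i m = ks \<alpha> t i k" for m
  proof (cases "m < k")
    case True then show ?thesis using chain[OF t True that(2)] by simp
  next
    case False then have "m = k" using that by simp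
    then show ?thesis using nh by simp
  qed
  have ksj: "ks \<alpha> t i j = ks \<alpha> t i k"
    using ks_mono[OF t, of l j \<alpha> i] ks_mono[OF t jk, of \<alpha> i] lP aj al by auto
  have kin: "k \<in> Bk i" by (simp add: i_def blk_mem)
  have jin: "j \<in> Bk i" using lP aj al jk kin by (auto simp: Bk_def)
  have "Th \<alpha> t i (Suc k) - Th \<alpha> t i j < 1"
    using key[OF jk ksj] unfolding aa_def by (rule floor_eq_diff)
  moreover have "Th \<alpha> t i (Suc k) - Th \<alpha> t i l < 1"
    using key[OF lk] lP unfolding aa_def by (intro floor_eq_diff) auto
  moreover have "blk j = i" using jin by (rule blk_unique)
  moreover have "lo i \<le> l" using lP by (simp add: Bk_def)
  ultimately show ?thesis using al by (simp add: i_def)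
qed

lemma Th_diff:
  assumes t: "0 < t" and bg: "big \<alpha> t i" and ab: "a \<le> b"
    and lt: "Th \<alpha> t i b - Th \<alpha> t i a < 1"
  shows "Phi \<alpha> i b - Phi \<alpha> i a < t * Am \<alpha> i / sig \<alpha> i \<and> real b - real a < t * Nb i / sig \<alpha> i"
proof -
  have s: "0 < sig \<alpha> i" using big_sig[OF t bg] .
  have A: "0 < Am \<alpha> i" using Am_pos[OF s] .
  have N: "0 < Nb i" by (rule Nb_pos)
  define P where "P = Phi \<alpha> i b - Phi \<alpha> i a"
  define Q where "Q = real b - real a"
  have P0: "0 \<le> P" using Phi_mono[OF ab, of \<alpha> i] by (simp add: P_def)
  have Q0: "0 \<le> Q" using ab by (simp add: Q_def)
  have "Th \<alpha> t i b - Th \<alpha> t i a = (P / Am \<alpha> i + Q / Nb i) * sig \<alpha> i / t"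
    using A N t unfolding Th_def P_def Q_def by (simp add: field_simps)
  with lt have "(P / Am \<alpha> i + Q / Nb i) * sig \<alpha> i / t < 1" by simp
  then have X: "(P / Am \<alpha> i + Q / Nb i) * sig \<alpha> i < t" using t by (simp add: pos_divide_less_eq)
  have "P / Am \<alpha> i * sig \<alpha> i \<le> (P / Am \<alpha> i + Q / Nb i) * sig \<alpha> i"
    using Q0 N s by (intro mult_right_mono) auto
  then have "P / Am \<alpha> i * sig \<alpha> i < t" using X by linarith
  then have "P * sig \<alpha> i < t * Am \<alpha> i" using A by (simp add: field_simps)
  then have 1: "P < t * Am \<alpha> i / sig \<alpha> i" using s by (simp add: pos_less_divide_eq)
  have "Q / Nb i * sig \<alpha> i \<le> (P / Am \<alpha> i + Q / Nb i) * sig \<alpha> i"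
    using P0 A s by (intro mult_right_mono) auto
  then have "Q / Nb i * sig \<alpha> i < t" using X by linarith
  then have "Q * sig \<alpha> i < t * Nb i" using N by (simp add: field_simps)
  then have 2: "Q < t * Nb i / sig \<alpha> i" using s by (simp add: pos_less_divide_eq)
  show ?thesis using 1 2 by (simp add: P_def Q_def)
qed

lemma sqrt_le_sqrt2_mult: "sqrt (real j + 1) \<le> sqrt 2 * sqrt (real (lo i) + 1)" if "j \<in> Bk i"
proof -
  have "j + 1 \<le> 2 * (lo i + 1)" using that lo_bound1[of i] by (simp add: Bk_def)
  then have "real (j + 1) \<le> real (2 * (lo i + 1))" by (simp only: of_nat_le_iff)
  then have "real j + 1 \<le> 2 * (real (lo i) + 1)" by simp
  then have A: "sqrt (real j + 1) \<le> sqrt (2 * (real (lo i) + 1))" by (rule real_sqrt_le_mono)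
  have B: "sqrt (2 * (real (lo i) + 1)) = sqrt 2 * sqrt (real (lo i) + 1)" by (rule real_sqrt_mult)
  show ?thesis using A B by linarith
qed

lemma sbig_bound:
  assumes t: "0 < t"
  shows "sqrt (real j + 1) * (\<Sum>k\<in>{k. k<K \<and> anc \<alpha> t k \<le> j \<and> j \<le> k \<and> big \<alpha> t (blk k)}. (cmod (\<alpha> k))\<^sup>2 * Wt (anc \<alpha> t) k) \<le> 2 * t\<^sup>2"
proof (cases "{k. k<K \<and> anc \<alpha> t k \<le> j \<and> j \<le> k \<and> big \<alpha> t (blk k)} = {}")
  case True then show ?thesis by (simp only: True sum.empty) simp
next
  case False
  define S where "S = {k. k<K \<and> anc \<alpha> t k \<le> j \<and> j \<le> k \<and> big \<alpha> t (blk k)}"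
  define i where "i = blk j"
  have fS: "finite S" unfolding S_def by (rule finite_subset[of _ "{..<K}"]) auto
  have Sp: "blk k = i \<and> lo i \<le> anc \<alpha> t k \<and> Th \<alpha> t i (Suc k) - Th \<alpha> t i j < 1 \<and>
      Th \<alpha> t i (Suc k) - Th \<alpha> t i (anc \<alpha> t k) < 1 \<and> j \<le> k \<and> anc \<alpha> t k \<le> j \<and> big \<alpha> t i" if "k \<in> S" for k
  proof -
    have k: "k < K" "anc \<alpha> t k \<le> j" "j \<le> k" "big \<alpha> t (blk k)" using that by (auto simp: S_def)
    from anc_cell[OF t k(4) k(2) k(3)] have "blk j = blk k" by simp
    then show ?thesis using anc_cell[OF t k(4) k(2) k(3)] k by (simp add: i_def)
  qed
  obtain k0 where "k0 \<in> S" using False by (auto simp: S_def)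
  then have bg: "big \<alpha> t i" using Sp by blast
  have s: "0 < sig \<alpha> i" by (rule big_sig[OF t bg])
  have A: "0 < Am \<alpha> i" by (rule Am_pos[OF s])
  have N: "0 < Nb i" by (rule Nb_pos)
  define m where "m = Max S"
  have mS: "m \<in> S" unfolding m_def using fS False S_def by (intro Max_in) auto
  have Sm: "k \<le> m" if "k \<in> S" for k unfolding m_def using fS that by (rule Max_ge)
  have jin: "j \<in> Bk i" by (simp add: i_def blk_mem)
  then have loj: "lo i \<le> j" by (simp add: Bk_def)
  have jm: "j \<le> Suc m" using Sp[OF mS] by simp
  have mass: "(\<Sum>k\<in>S. (cmod (\<alpha> k))\<^sup>2) \<le> t * Am \<alpha> i / sig \<alpha> i"
  proof -
    have "(\<Sum>k\<in>S. (cmod (\<alpha> k))\<^sup>2) \<le> (\<Sum>k\<in>{j..<Suc m}. (cmod (\<alpha> k))\<^sup>2)"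
      by (rule sum_mono2) (use Sp Sm in \<open>auto simp: less_Suc_eq_le\<close>)
    also have "\<dots> = Phi \<alpha> i (Suc m) - Phi \<alpha> i j" by (rule Phi_diff[OF loj jm, symmetric])
    also have "\<dots> < t * Am \<alpha> i / sig \<alpha> i"
      using Th_diff[OF t bg jm] Sp[OF mS] by simp
    finally show ?thesis by simp
  qed
  define c where "c = sqrt 2 * (t * Nb i / sig \<alpha> i)"
  have wk: "sqrt (real j + 1) * Wt (anc \<alpha> t) k \<le> c" if kS: "k \<in> S" for k
  proof -
    have ak: "anc \<alpha> t k \<le> Suc k" by (rule anc_le)
    have lok: "lo i \<le> anc \<alpha> t k" using Sp[OF kS] by simp
    have "Wt (anc \<alpha> t) k \<le> (\<Sum>x\<in>{anc \<alpha> t k..k}. 1 / sqrt (real (lo i) + 1))"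
      unfolding Wt_def
    proof (rule sum_mono)
      fix x assume "x \<in> {anc \<alpha> t k..k}"
      then have "lo i \<le> x" using lok by simp
      then have "sqrt (real (lo i) + 1) \<le> sqrt (real x + 1)" by simp
      then show "1 / sqrt (real x + 1) \<le> 1 / sqrt (real (lo i) + 1)"
        by (intro divide_left_mono) auto
    qed
    also have "\<dots> = (real (Suc k) - real (anc \<alpha> t k)) / sqrt (real (lo i) + 1)"
      using ak by (simp add: of_nat_diff)
    finally have W: "Wt (anc \<alpha> t) k \<le> (real (Suc k) - real (anc \<alpha> t k)) / sqrt (real (lo i) + 1)" .
    have d: "real (Suc k) - real (anc \<alpha> t k) < t * Nb i / sig \<alpha> i"
      using Th_diff[OF t bg ak] Sp[OF kS] by simp
    have d0: "0 \<le> real (Suc k) - real (anc \<alpha> t k)" using ak by simp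
    have W0: "0 \<le> Wt (anc \<alpha> t) k" unfolding Wt_def by (rule sum_nonneg) simp
    have "sqrt (real j + 1) * Wt (anc \<alpha> t) k \<le> (sqrt 2 * sqrt (real (lo i) + 1)) * ((real (Suc k) - real (anc \<alpha> t k)) / sqrt (real (lo i) + 1))"
      using sqrt_le_sqrt2_mult[OF jin] W W0 by (intro mult_mono) auto
    also have "\<dots> = sqrt 2 * (real (Suc k) - real (anc \<alpha> t k))" by simp
    also have "\<dots> \<le> c" unfolding c_def using d by (intro mult_left_mono) auto
    finally show ?thesis .
  qed
  have "sqrt (real j + 1) * (\<Sum>k\<in>S. (cmod (\<alpha> k))\<^sup>2 * Wt (anc \<alpha> t) k)
      = (\<Sum>k\<in>S. (cmod (\<alpha> k))\<^sup>2 * (sqrt (real j + 1) * Wt (anc \<alpha> t) k))"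
    by (simp add: sum_distrib_left mult_ac)
  also have "\<dots> \<le> (\<Sum>k\<in>S. (cmod (\<alpha> k))\<^sup>2 * c)"
    by (rule sum_mono) (use wk in \<open>simp add: mult_left_mono\<close>)
  also have "\<dots> = c * (\<Sum>k\<in>S. (cmod (\<alpha> k))\<^sup>2)" by (simp add: sum_distrib_left mult.commute)
  also have "\<dots> \<le> c * (t * Am \<alpha> i / sig \<alpha> i)"
    using mass t N s by (intro mult_left_mono) (auto simp: c_def)
  also have "\<dots> = sqrt 2 * t\<^sup>2 * (Nb i * Am \<alpha> i / (sig \<alpha> i)\<^sup>2)"
    unfolding c_def by (simp add: power2_eq_square field_simps)
  also have "\<dots> \<le> sqrt 2 * t\<^sup>2 * 1"
  proof (rule mult_left_mono)
    show "Nb i * Am \<alpha> i / (sig \<alpha> i)\<^sup>2 \<le> 1" using NbAm_le[of i \<alpha>] s by simp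
  qed simp
  also have "\<dots> \<le> 2 * t\<^sup>2"
  proof -
    have "sqrt 2 \<le> 2"
      using real_sqrt_le_mono[of 2 4] by (simp add: real_sqrt_four)
    then have "sqrt 2 * t\<^sup>2 \<le> 2 * t\<^sup>2" by (rule mult_right_mono) simp
    then show ?thesis by simp
  qed
  finally show ?thesis unfolding S_def .
qed

lemma Wt_zero_bound: "(\<Sum>x\<in>{0..k}. 1 / sqrt (real x + 1)) \<le> 2 * sqrt (real k + 1)"
proof (induction k)
  case 0 then show ?case by simp
next
  case (Suc k)
  define a where "a = sqrt (real k + 1)"
  define b where "b = sqrt (real k + 2)"
  have a2: "a * a = real k + 1" unfolding a_def by simp
  have b2: "b * b = real k + 2" unfolding b_def by simp
  have b0: "0 < b" unfolding b_def by simp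
  have "0 \<le> (b - a) * (b - a)" by simp
  then have "2 * a * b + 1 \<le> 2 * (b * b)" using a2 b2 by (simp add: algebra_simps)
  then have "(2 * a * b + 1) / b \<le> 2 * (b * b) / b" using b0 by (intro divide_right_mono) auto
  then have key: "2 * a + 1 / b \<le> 2 * b" using b0 by (simp add: field_simps)
  have "(\<Sum>x\<in>{0..Suc k}. 1 / sqrt (real x + 1)) = (\<Sum>x\<in>{0..k}. 1 / sqrt (real x + 1)) + 1 / b"
    by (simp add: b_def add.commute)
  also have "\<dots> \<le> 2 * a + 1 / b" using Suc by (simp add: a_def)
  also have "\<dots> \<le> 2 * b" by (rule key)
  finally show ?case by (simp add: b_def add.commute)
qed

lemma geom_le: fixes r :: real assumes "0 \<le> r" "r < 1" shows "(\<Sum>m<n. r^m) \<le> 1 / (1 - r)"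
proof -
  have "(\<Sum>m<n. r^m) = (1 - r^n) / (1 - r)" by (subst sum_gp_strict) (use assms in auto)
  also have "\<dots> \<le> 1 / (1 - r)" using assms by (intro divide_right_mono) auto
  finally show ?thesis .
qed

lemma tail_bound:
  assumes t: "0 < t"
  shows "sqrt (real j + 1) * (\<Sum>k\<in>{k. j \<le> k \<and> k < K \<and> \<not> big \<alpha> t (blk k)}. (cmod (\<alpha> k))\<^sup>2 * (2 * sqrt (real k + 1))) \<le> t\<^sup>2"
proof -
  define S where "S = {k. j \<le> k \<and> k < K \<and> \<not> big \<alpha> t (blk k)}"
  define h where "h k = (cmod (\<alpha> k))\<^sup>2 * (2 * sqrt (real k + 1))" for k
  define i0 where "i0 = blk j"
  define T where "T = {i0..<Suc (blk K)}"
  define q where "q = sqrt (2::real)"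
  have q2: "q * q = 2" by (simp add: q_def)
  have q1: "5/4 \<le> q"
  proof -
    have "sqrt ((5/4)\<^sup>2) \<le> sqrt (2::real)" by (intro real_sqrt_le_mono) (simp add: power2_eq_square)
    then show ?thesis by (simp add: q_def)
  qed
  have fS: "finite S" unfolding S_def by (rule finite_subset[of _ "{..<K}"]) auto
  have ST: "blk ` S \<subseteq> T" unfolding S_def T_def i0_def
    by (auto intro!: blk_mono simp: less_Suc_eq_le)
  have sum_eq: "(\<Sum>k\<in>S. h k) = (\<Sum>i\<in>T. \<Sum>k\<in>{k\<in>S. blk k = i}. h k)"
    by (rule sum.group[symmetric]) (use fS ST in \<open>auto simp: T_def\<close>)
  have blockb: "(\<Sum>k\<in>{k\<in>S. blk k = i}. h k) \<le> t\<^sup>2 / 8 * (q / q ^ i)" for i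
  proof (cases "big \<alpha> t i")
    case True
    then have E: "{k\<in>S. blk k = i} = {}" by (auto simp: S_def)
    have Z: "(\<Sum>k\<in>{k\<in>S. blk k = i}. h k) = 0" by (simp only: E sum.empty)
    have "0 < q" using q1 by simp
    then show ?thesis unfolding Z by simp
  next
    case False
    have sg: "sig \<alpha> i \<le> t / 4" using False by (simp add: big_def)
    have "(\<Sum>k\<in>{k\<in>S. blk k = i}. h k) \<le> (\<Sum>k\<in>Bk i. h k)"
      by (rule sum_mono2) (auto simp: h_def blk_mem intro: blk_mem dest: sym)
    also have "\<dots> \<le> (\<Sum>k\<in>Bk i. 2 * (real (k + 1) * (cmod (\<alpha> k))\<^sup>2) / sqrt (real (lo i) + 1))"
    proof (rule sum_mono)
      fix k assume "k \<in> Bk i"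
      then have "lo i \<le> k" by (simp add: Bk_def)
      then have l: "sqrt (real (lo i) + 1) \<le> sqrt (real k + 1)" by simp
      have "sqrt (real k + 1) * sqrt (real (lo i) + 1) \<le> sqrt (real k + 1) * sqrt (real k + 1)"
        using l by (intro mult_left_mono) auto
      also have "\<dots> = real k + 1" by simp
      finally have "sqrt (real k + 1) \<le> (real k + 1) / sqrt (real (lo i) + 1)"
        by (simp add: pos_le_divide_eq)
      then have "(cmod (\<alpha> k))\<^sup>2 * (2 * sqrt (real k + 1)) \<le> (cmod (\<alpha> k))\<^sup>2 * (2 * ((real k + 1) / sqrt (real (lo i) + 1)))"
        by (intro mult_left_mono) auto
      then show "h k \<le> 2 * (real (k + 1) * (cmod (\<alpha> k))\<^sup>2) / sqrt (real (lo i) + 1)"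
        by (simp add: h_def field_simps)
    qed
    also have "\<dots> = 2 * (sig \<alpha> i)\<^sup>2 / sqrt (real (lo i) + 1)"
      by (simp add: sig_sq sum_divide_distrib sum_distrib_left)
    also have "\<dots> \<le> 2 * (t / 4)\<^sup>2 / sqrt (real (lo i) + 1)"
      using sg sig_nonneg[of \<alpha> i] by (intro divide_right_mono mult_left_mono power_mono) auto
    also have "\<dots> \<le> t\<^sup>2 / 8 * (q / q ^ i)"
    proof -
      have "2^i \<le> 2 * (real (lo i) + 1)" using lo_bound1[of i]
        by (metis (mono_tags, opaque_lifting) of_nat_1 of_nat_add of_nat_le_iff of_nat_mult of_nat_numeral of_nat_power)
      then have "sqrt (2^i) \<le> sqrt (2 * (real (lo i) + 1))" by (rule real_sqrt_le_mono)
      moreover have "sqrt (2 * (real (lo i) + 1)) = q * sqrt (real (lo i) + 1)" unfolding q_def by (rule real_sqrt_mult)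
      moreover have "sqrt (2^i) = q ^ i" by (simp add: q_def real_sqrt_power)
      ultimately have "q ^ i \<le> q * sqrt (real (lo i) + 1)" by simp
      then have "1 / sqrt (real (lo i) + 1) \<le> q / q ^ i" using q1
        by (simp add: field_simps)
      then have "t\<^sup>2 / 8 * (1 / sqrt (real (lo i) + 1)) \<le> t\<^sup>2 / 8 * (q / q ^ i)" by (intro mult_left_mono) auto
      then show ?thesis by (simp add: power2_eq_square)
    qed
    finally show ?thesis .
  qed
  have jb: "sqrt (real j + 1) \<le> q ^ i0"
  proof -
    have "j + 1 \<le> 2 ^ i0" using blk_less[of j] by (simp add: i0_def)
    then have "real j + 1 \<le> 2 ^ i0"
      by (metis (mono_tags, opaque_lifting) of_nat_1 of_nat_add of_nat_le_iff of_nat_numeral of_nat_power)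
    then have "sqrt (real j + 1) \<le> sqrt (2 ^ i0)" by (rule real_sqrt_le_mono)
    then show ?thesis by (simp add: q_def real_sqrt_power)
  qed
  have "sqrt (real j + 1) * (\<Sum>k\<in>S. h k) \<le> q ^ i0 * (\<Sum>i\<in>T. t\<^sup>2 / 8 * (q / q ^ i))"
    unfolding sum_eq using jb blockb q1
    by (intro mult_mono sum_mono) (auto intro!: sum_nonneg simp: h_def)
  also have "\<dots> = t\<^sup>2 / 8 * q * (\<Sum>i\<in>T. (1 / q) ^ (i - i0))"
  proof -
    have "q ^ i0 * (t\<^sup>2 / 8 * (q / q ^ i)) = t\<^sup>2 / 8 * q * (1 / q) ^ (i - i0)" if "i \<in> T" for i
    proof -
      have "i0 \<le> i" using that by (simp add: T_def)
      then have qi: "q ^ i = q ^ i0 * q ^ (i - i0)" by (simp flip: power_add)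
      have q0: "0 < q" using q1 by simp
      show ?thesis unfolding qi using q0 by (simp add: power_one_over)
    qed
    note eq = this
    have "q ^ i0 * (\<Sum>i\<in>T. t\<^sup>2 / 8 * (q / q ^ i)) = (\<Sum>i\<in>T. q ^ i0 * (t\<^sup>2 / 8 * (q / q ^ i)))"
      by (rule sum_distrib_left)
    also have "\<dots> = (\<Sum>i\<in>T. t\<^sup>2 / 8 * q * (1 / q) ^ (i - i0))"
    proof (rule sum.cong)
      fix i assume "i \<in> T" then show "q ^ i0 * (t\<^sup>2 / 8 * (q / q ^ i)) = t\<^sup>2 / 8 * q * (1 / q) ^ (i - i0)" by (rule eq)
    qed (rule refl)
    also have "\<dots> = t\<^sup>2 / 8 * q * (\<Sum>i\<in>T. (1 / q) ^ (i - i0))"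
      by (rule sum_distrib_left[symmetric])
    finally show ?thesis .
  qed
  finally have X1: "sqrt (real j + 1) * (\<Sum>k\<in>S. h k) \<le> t\<^sup>2 / 8 * q * (\<Sum>i\<in>T. (1 / q) ^ (i - i0))" .
  have "(\<Sum>i\<in>T. (1 / q) ^ (i - i0)) = (\<Sum>m\<in>{0..<Suc (blk K) - i0}. (1 / q) ^ (m + i0 - i0))"
    unfolding T_def
    by (rule sum.atLeastLessThan_shift_0[unfolded o_def, of "\<lambda>i. (1 / q) ^ (i - i0)" i0 "Suc (blk K)", simplified add.commute])
  also have "\<dots> = (\<Sum>m<Suc (blk K) - i0. (1 / q) ^ m)" by (simp add: atLeast0LessThan)
  also have "\<dots> \<le> 1 / (1 - 1 / q)" using q1 by (intro geom_le) auto
  also have "1 / (1 - 1 / q) = q / (q - 1)" using q1 by (simp add: field_simps)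
  finally have X2: "(\<Sum>i\<in>T. (1 / q) ^ (i - i0)) \<le> q / (q - 1)" .
  have X3: "t\<^sup>2 / 8 * q * (\<Sum>i\<in>T. (1 / q) ^ (i - i0)) \<le> t\<^sup>2 / 8 * q * (q / (q - 1))"
    using X2 q1 by (intro mult_left_mono) auto
  have "q - 1 \<noteq> 0" using q1 by simp
  then have "t\<^sup>2 / 8 * q * (q / (q - 1)) = t\<^sup>2 * ((q * q) / (8 * (q - 1)))" by (simp add: field_simps)
  also have "\<dots> = t\<^sup>2 * (2 / (8 * (q - 1)))" using q2 by simp
  also have "\<dots> \<le> t\<^sup>2 * 1"
  proof (rule mult_left_mono)
    show "2 / (8 * (q - 1)) \<le> 1" using q1 by (simp add: field_simps)
  qed simp
  finally have X4: "t\<^sup>2 / 8 * q * (q / (q - 1)) \<le> t\<^sup>2" by simp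
  have "sqrt (real j + 1) * (\<Sum>k\<in>S. h k) \<le> t\<^sup>2" using X1 X3 X4 by linarith
  then show ?thesis unfolding S_def h_def .
qed

lemma H_bound:
  assumes t: "0 < t"
  shows "sqrt (real j + 1) * (\<Sum>k\<in>{k. k<K \<and> anc \<alpha> t k \<le> j \<and> j \<le> k}. (cmod (\<alpha> k))\<^sup>2 * Wt (anc \<alpha> t) k) \<le> 3 * t\<^sup>2"
proof -
  define S where "S = {k. k<K \<and> anc \<alpha> t k \<le> j \<and> j \<le> k}"
  define Sb where "Sb = {k. k<K \<and> anc \<alpha> t k \<le> j \<and> j \<le> k \<and> big \<alpha> t (blk k)}"
  define Ss where "Ss = {k. k<K \<and> anc \<alpha> t k \<le> j \<and> j \<le> k \<and> \<not> big \<alpha> t (blk k)}"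
  define Tl where "Tl = {k. j \<le> k \<and> k < K \<and> \<not> big \<alpha> t (blk k)}"
  define h where "h k = (cmod (\<alpha> k))\<^sup>2 * Wt (anc \<alpha> t) k" for k
  have fin: "finite Sb" "finite Ss" "finite Tl"
    unfolding Sb_def Ss_def Tl_def by (auto intro: finite_subset[of _ "{..<K}"])
  have SU: "S = Sb \<union> Ss" "Sb \<inter> Ss = {}" unfolding S_def Sb_def Ss_def by auto
  have split: "(\<Sum>k\<in>S. h k) = (\<Sum>k\<in>Sb. h k) + (\<Sum>k\<in>Ss. h k)"
    unfolding SU(1) by (rule sum.union_disjoint) (use fin SU(2) in auto)
  have "(\<Sum>k\<in>Ss. h k) \<le> (\<Sum>k\<in>Ss. (cmod (\<alpha> k))\<^sup>2 * (2 * sqrt (real k + 1)))"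
  proof (rule sum_mono)
    fix k assume "k \<in> Ss"
    then have "anc \<alpha> t k = 0" unfolding Ss_def by (auto intro: anc_small)
    then have "Wt (anc \<alpha> t) k = (\<Sum>x\<in>{0..k}. 1 / sqrt (real x + 1))" by (simp add: Wt_def)
    then have "Wt (anc \<alpha> t) k \<le> 2 * sqrt (real k + 1)" using Wt_zero_bound[of k] by simp
    then show "h k \<le> (cmod (\<alpha> k))\<^sup>2 * (2 * sqrt (real k + 1))" unfolding h_def
      by (rule mult_left_mono) simp
  qed
  also have "\<dots> \<le> (\<Sum>k\<in>Tl. (cmod (\<alpha> k))\<^sup>2 * (2 * sqrt (real k + 1)))"
    by (rule sum_mono2) (use fin in \<open>auto simp: Ss_def Tl_def\<close>)
  finally have small: "(\<Sum>k\<in>Ss. h k) \<le> (\<Sum>k\<in>Tl. (cmod (\<alpha> k))\<^sup>2 * (2 * sqrt (real k + 1)))" .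
  have B1: "sqrt (real j + 1) * (\<Sum>k\<in>Sb. h k) \<le> 2 * t\<^sup>2"
    using sbig_bound[OF t, where j=j and K=K and \<alpha>=\<alpha>] unfolding Sb_def h_def .
  have B2: "sqrt (real j + 1) * (\<Sum>k\<in>Tl. (cmod (\<alpha> k))\<^sup>2 * (2 * sqrt (real k + 1))) \<le> t\<^sup>2"
    using tail_bound[OF t, where j=j and K=K and \<alpha>=\<alpha>] unfolding Tl_def .
  have B3: "sqrt (real j + 1) * (\<Sum>k\<in>Ss. h k) \<le> sqrt (real j + 1) * (\<Sum>k\<in>Tl. (cmod (\<alpha> k))\<^sup>2 * (2 * sqrt (real k + 1)))"
    using small by (rule mult_left_mono) simp
  have "sqrt (real j + 1) * (\<Sum>k\<in>S. h k) = sqrt (real j + 1) * (\<Sum>k\<in>Sb. h k) + sqrt (real j + 1) * (\<Sum>k\<in>Ss. h k)"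
    unfolding split by (simp add: distrib_left)
  then have "sqrt (real j + 1) * (\<Sum>k\<in>S. h k) \<le> 3 * t\<^sup>2" using B1 B2 B3 by linarith
  then show ?thesis unfolding S_def h_def .
qed

definition Nt :: "(nat \<Rightarrow> complex) \<Rightarrow> real \<Rightarrow> nat" where
  "Nt \<alpha> t = (\<Sum>i\<in>{i. big \<alpha> t i}. nat (\<lfloor>4 * sig \<alpha> i / t\<rfloor> + 1))"

lemma Th_top: assumes t: "0 < t" and bg: "big \<alpha> t i"
  shows "Th \<alpha> t i (2^i) = 2 * sig \<alpha> i / t"
proof -
  have A: "0 < Am \<alpha> i" using Am_pos[OF big_sig[OF t bg]] .
  have N: "Nb i = real (2^i) - real (lo i)" unfolding Nb_def using lo_less[of i] by (simp add: of_nat_diff)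
  have "(real (2^i) - real (lo i)) / Nb i = 1" using Nb_pos[of i] N by simp
  moreover have "real (lo i) < 2^i" using lo_less[of i]
    by (metis of_nat_less_iff of_nat_numeral of_nat_power)
  ultimately show ?thesis unfolding Th_def Phi_top using A by simp
qed

lemma ks_range:
  assumes t: "0 < t" and bg: "big \<alpha> t i" and k: "k \<in> Bk i"
  shows "ks \<alpha> t i k \<in> {0..\<lfloor>4 * sig \<alpha> i / t\<rfloor>}"
proof -
  have s: "0 < sig \<alpha> i" by (rule big_sig[OF t bg])
  have A: "0 < Am \<alpha> i" by (rule Am_pos[OF s])
  have lk: "lo i \<le> k" "k < 2^i" using k by (auto simp: Bk_def)
  have "0 \<le> Th \<alpha> t i k" unfolding Th_def using Phi_nonneg[of \<alpha> i k] A Nb_pos[of i] s t lk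
    by (intro divide_nonneg_pos mult_nonneg_nonneg add_nonneg_nonneg) auto
  then have a0: "0 \<le> aa \<alpha> t i k" by (simp add: aa_def)
  have a1: "aa \<alpha> t i k \<le> aa \<alpha> t i (Suc k)" by (rule aa_mono[OF t]) simp
  have "Th \<alpha> t i (Suc k) \<le> Th \<alpha> t i (2^i)" by (rule Th_mono[OF t]) (use lk in simp)
  then have "Th \<alpha> t i (Suc k) \<le> 2 * sig \<alpha> i / t" using Th_top[OF t bg] by simp
  then have a2: "aa \<alpha> t i (Suc k) \<le> \<lfloor>2 * sig \<alpha> i / t\<rfloor>" unfolding aa_def by (rule floor_mono)
  have "2 * \<lfloor>2 * sig \<alpha> i / t\<rfloor> \<le> \<lfloor>4 * sig \<alpha> i / t\<rfloor>"
  proof -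
    have "real_of_int \<lfloor>2 * sig \<alpha> i / t\<rfloor> \<le> 2 * sig \<alpha> i / t" by (rule of_int_floor_le)
    moreover have "4 * sig \<alpha> i / t = 2 * (2 * sig \<alpha> i / t)" by simp
    ultimately have "real_of_int (2 * \<lfloor>2 * sig \<alpha> i / t\<rfloor>) \<le> 4 * sig \<alpha> i / t" by linarith
    then show ?thesis by (simp add: le_floor_iff)
  qed
  then show ?thesis using a0 a1 a2 unfolding ks_def by simp
qed

lemma card_block:
  assumes t: "0 < t" and bg: "big \<alpha> t i"
  shows "card (anc \<alpha> t ` Bk i) \<le> nat (\<lfloor>4 * sig \<alpha> i / t\<rfloor> + 1)"
proof -
  define G where "G v = (let l = (LEAST l. l \<in> Bk i \<and> ks \<alpha> t i l = v) in
     if aa \<alpha> t i l \<noteq> aa \<alpha> t i (Suc l) then Suc l else l)" for v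
  have eq: "anc \<alpha> t k = G (ks \<alpha> t i k)" if k: "k \<in> Bk i" for k
  proof -
    have bk: "blk k = i" using k by (rule blk_unique)
    define l where "l = (LEAST l. l \<in> Bk i \<and> ks \<alpha> t i l = ks \<alpha> t i k)"
    have lP: "l \<in> Bk i \<and> ks \<alpha> t i l = ks \<alpha> t i k"
      unfolding l_def by (rule LeastI[of _ k]) (simp add: k)
    have lk: "l \<le> k" unfolding l_def by (rule Least_le) (simp add: k)
    have Gv: "G (ks \<alpha> t i k) = (if aa \<alpha> t i l \<noteq> aa \<alpha> t i (Suc l) then Suc l else l)"
      unfolding G_def l_def Let_def ..
    have A: "anc \<alpha> t k = (if aa \<alpha> t i k \<noteq> aa \<alpha> t i (Suc k) then Suc k else l)"
      unfolding anc_def bk l_def using bg by simp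
    show ?thesis
    proof (cases "l < k")
      case True
      from chain[OF t True, where \<alpha>=\<alpha> and i=i] lP have c: "aa \<alpha> t i k = aa \<alpha> t i (Suc k)" "aa \<alpha> t i l = aa \<alpha> t i (Suc l)"
        by simp_all
      show ?thesis unfolding A Gv using c by simp
    next
      case False
      then have "l = k" using lk by simp
      then show ?thesis unfolding A Gv by simp
    qed
  qed
  have "anc \<alpha> t ` Bk i = G ` (ks \<alpha> t i ` Bk i)" using eq by (auto simp: image_iff)
  then have "card (anc \<alpha> t ` Bk i) \<le> card (ks \<alpha> t i ` Bk i)" by (simp add: card_image_le)
  also have "\<dots> \<le> card {0..\<lfloor>4 * sig \<alpha> i / t\<rfloor>}"
    by (rule card_mono) (use ks_range[OF t bg] in auto)
  also have "\<dots> = nat (\<lfloor>4 * sig \<alpha> i / t\<rfloor> + 1)" by simp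
  finally show ?thesis .
qed

lemma count_anc:
  assumes t: "0 < t" and fin: "finite {i. big \<alpha> t i}"
  shows "finite (range (anc \<alpha> t)) \<and> card (range (anc \<alpha> t) - {0}) \<le> Nt \<alpha> t"
proof -
  define U where "U = (\<Union>i\<in>{i. big \<alpha> t i}. anc \<alpha> t ` Bk i)"
  have fU: "finite U" unfolding U_def using fin by auto
  have sub: "range (anc \<alpha> t) - {0} \<subseteq> U"
  proof
    fix x assume "x \<in> range (anc \<alpha> t) - {0}"
    then obtain k where x: "x = anc \<alpha> t k" "anc \<alpha> t k \<noteq> 0" by auto
    then have "big \<alpha> t (blk k)" using anc_small[of \<alpha> t k] by auto
    then show "x \<in> U" unfolding U_def using x blk_mem[of k] by blast
  qed
  have "range (anc \<alpha> t) \<subseteq> insert 0 (range (anc \<alpha> t) - {0})" by blast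
  also have "\<dots> \<subseteq> insert 0 U" using sub by (rule insert_mono)
  finally have sub2: "range (anc \<alpha> t) \<subseteq> insert 0 U" .
  have "finite (insert 0 U)" using fU by simp
  then have f: "finite (range (anc \<alpha> t))" by (rule finite_subset[OF sub2])
  have "card (range (anc \<alpha> t) - {0}) \<le> card U" by (rule card_mono[OF fU sub])
  also have "\<dots> \<le> (\<Sum>i\<in>{i. big \<alpha> t i}. card (anc \<alpha> t ` Bk i))"
    unfolding U_def by (rule card_UN_le[OF fin])
  also have "\<dots> \<le> Nt \<alpha> t" unfolding Nt_def
    by (rule sum_mono) (use card_block[OF t] in auto)
  finally show ?thesis using f by simp
qed

lemma key:
  assumes a: "\<alpha> \<in> l2" and t: "0 < t" and fin: "finite {i. big \<alpha> t i}" and n: "Nt \<alpha> t \<le> n"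
  shows "approx_num (R_op \<alpha>) n \<le> ereal (2 * t)"
proof -
  have c: "finite (range (anc \<alpha> t))" "card (range (anc \<alpha> t) - {0}) \<le> n"
    using count_anc[OF t fin] n by auto
  have rk: "lin_rank_le n (Pg \<alpha> (anc \<alpha> t))" by (rule Pg_rank[OF a c])
  have "approx_num (R_op \<alpha>) n \<le> opnorm (\<lambda>f k. R_op \<alpha> f k - Pg \<alpha> (anc \<alpha> t) f k)"
    by (rule approx_num_le[OF rk])
  also have "\<dots> \<le> ereal (sqrt (3 * t\<^sup>2))"
    by (rule opnorm_err) (auto intro: anc_le H_bound[OF t])
  also have "sqrt (3 * t\<^sup>2) \<le> 2 * t"
  proof -
    have A: "sqrt (3 * t\<^sup>2) \<le> sqrt ((2 * t)\<^sup>2)" by (intro real_sqrt_le_mono) (simp add: power2_eq_square)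
    have B: "sqrt ((2 * t)\<^sup>2) = 2 * t" using t by (intro real_sqrt_unique) auto
    show ?thesis using A B by linarith
  qed
  then have "ereal (sqrt (3 * t\<^sup>2)) \<le> ereal (2 * t)" by simp
  finally show ?thesis .
qed

lemma real_of_ereal_le_bound:
  fixes x :: ereal
  assumes "0 \<le> x" "x \<le> ereal c" shows "real_of_ereal x \<le> c"
  using assms by (cases x) auto

lemma geo_sum:
  fixes c x q :: real
  assumes c: "0 < c" and x: "0 < x" and q: "0 < q"
  shows "(1 - (1/2) powr q) * (\<Sum>j<J. if c / 2^j < x then (c / 2^j) powr q else 0)
           + (min (c / 2^J) x) powr q \<le> x powr q"
proof (induction J)
  case 0
  show ?case using c x q by (simp add: powr_mono2)
next
  case (Suc J)
  define v where "v = c / 2^J"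
  define r where "r = (1/2::real) powr q"
  define SJ where "SJ = (\<Sum>j<J. if c / 2^j < x then (c / 2^j) powr q else 0)"
  have v0: "0 < v" using c by (simp add: v_def)
  have vS: "c / 2 ^ Suc J = v / 2" by (simp add: v_def)
  have vq: "(v / 2) powr q = r * v powr q" unfolding r_def
    by (simp add: powr_divide)
  have r1: "r < 1" unfolding r_def using powr_less_mono2[of q "1/2" 1] q by simp
  have SJ0: "0 \<le> SJ" unfolding SJ_def by (rule sum_nonneg) simp
  have IH: "(1 - r) * SJ + (min v x) powr q \<le> x powr q" using Suc.IH by (simp add: r_def SJ_def v_def)
  have eq: "(\<Sum>j<Suc J. if c / 2^j < x then (c / 2^j) powr q else 0) = SJ + (if v < x then v powr q else 0)"
    by (simp add: SJ_def v_def)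
  show ?case
  proof (cases "v < x")
    case True
    then have m1: "min v x = v" and m2: "min (v/2) x = v/2" using v0 by auto
    have "(1 - r) * (SJ + v powr q) + (v/2) powr q = (1 - r) * SJ + v powr q"
      unfolding vq by (simp add: algebra_simps)
    then show ?thesis using IH True unfolding eq vS r_def[symmetric] m2 by (simp add: m1)
  next
    case False
    then have m1: "min v x = x" by auto
    have "(1 - r) * SJ \<le> 0" using IH m1 by simp
    moreover have "(min (v/2) x) powr q \<le> x powr q" using v0 x q by (intro powr_mono2) auto
    ultimately show ?thesis using False unfolding eq vS r_def[symmetric] by simp
  qed
qed

lemma geo_sum':
  fixes c x q :: real
  assumes c: "0 < c" and x: "0 < x" and q: "0 < q"
  shows "(\<Sum>j<J. if c / 2^j < x then (c / 2^j) powr q else 0) \<le> x powr q / (1 - (1/2) powr q)"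
proof -
  have r1: "(1/2::real) powr q < 1" using powr_less_mono2[of q "1/2" 1] q by simp
  have "(1 - (1/2) powr q) * (\<Sum>j<J. if c / 2^j < x then (c / 2^j) powr q else 0) \<le> x powr q"
    using geo_sum[OF c x q, of J] powr_ge_zero[of "min (c / 2^J) x" q] by linarith
  moreover have "0 < 1 - (1/2::real) powr q" using r1 by simp
  ultimately show ?thesis by (simp add: pos_le_divide_eq mult.commute)
qed

lemma sum_indicator_le:
  fixes w :: real assumes "0 \<le> w"
  shows "(\<Sum>n<M. if n < N then w else 0) \<le> real N * w"
proof -
  have "(\<Sum>n<M. if n < N then w else 0) = (\<Sum>n\<in>{n\<in>{..<M}. n < N}. w)"
    by (rule sum.inter_filter[symmetric]) simp
  also have "\<dots> = real (card {n\<in>{..<M}. n < N}) * w" by simp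
  also have "\<dots> \<le> real N * w"
  proof (rule mult_right_mono)
    have "card {n\<in>{..<M}. n < N} \<le> card {..<N}" by (rule card_mono) auto
    then show "real (card {n\<in>{..<M}. n < N}) \<le> real N" by simp
  qed (rule assms)
  finally show ?thesis .
qed

lemma big_finite:
  assumes p: "0 < p" and sm: "summable (\<lambda>m. sig \<alpha> m powr p)" and t: "0 < t"
  shows "finite {i. big \<alpha> t i}"
proof -
  have "(\<lambda>m. sig \<alpha> m powr p) \<longlonglongrightarrow> 0" by (rule summable_LIMSEQ_zero[OF sm])
  moreover have "0 < (t/4) powr p" using t by simp
  ultimately have "eventually (\<lambda>m. sig \<alpha> m powr p < (t/4) powr p) sequentially"
    by (rule order_tendstoD)
  then obtain N where N: "\<And>m. m \<ge> N \<Longrightarrow> sig \<alpha> m powr p < (t/4) powr p"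
    by (auto simp: eventually_sequentially)
  have "{i. big \<alpha> t i} \<subseteq> {..<N}"
  proof
    fix i assume "i \<in> {i. big \<alpha> t i}"
    then have b: "t/4 < sig \<alpha> i" by (simp add: big_def)
    show "i \<in> {..<N}"
    proof (rule ccontr)
      assume "i \<notin> {..<N}"
      then have "sig \<alpha> i powr p < (t/4) powr p" using N by simp
      moreover have "(t/4) powr p < sig \<alpha> i powr p" using b t p by (intro powr_less_mono2) auto
      ultimately show False by simp
    qed
  qed
  then show ?thesis by (rule finite_subset) simp
qed

lemma nat_floor_le: assumes "1 < x" shows "real (nat (\<lfloor>x\<rfloor> + 1)) \<le> 2 * x"
proof -
  have "real_of_int \<lfloor>x\<rfloor> \<le> x" by (rule of_int_floor_le)
  moreover have "0 \<le> \<lfloor>x\<rfloor> + 1" using assms by linarith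
  ultimately have "real (nat (\<lfloor>x\<rfloor> + 1)) = real_of_int \<lfloor>x\<rfloor> + 1" by simp
  then show ?thesis using \<open>real_of_int \<lfloor>x\<rfloor> \<le> x\<close> assms by linarith
qed

lemma L4:
  assumes p: "1 < p" and sm: "summable (\<lambda>m. sig \<alpha> m powr p)" and c: "0 < c"
  shows "(\<Sum>j<J. real (Nt \<alpha> (c/2^j)) * (4 * c / 2^j) powr p)
     \<le> (4 powr p * 8 * 4 powr (p - 1) / (1 - (1/2) powr (p - 1))) * (\<Sum>m. sig \<alpha> m powr p)"
proof -
  define F where "F = {i. big \<alpha> (c/2^J) i}"
  define v where "v j = c / 2^j" for j
  define Kc where "Kc = 4 powr p * 8 * 4 powr (p - 1) / (1 - (1/2::real) powr (p - 1))"
  have fF: "finite F" unfolding F_def using p c by (intro big_finite[OF _ sm]) auto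
  have v0: "0 < v j" for j using c by (simp add: v_def)
  have step: "real (Nt \<alpha> (v j)) * (4 * c / 2^j) powr p
      \<le> (\<Sum>i\<in>F. 4 powr p * 8 * sig \<alpha> i * (if v j < 4 * sig \<alpha> i then v j powr (p - 1) else 0))"
    if jJ: "j < J" for j
  proof -
    have vJ: "c / 2^J \<le> v j" unfolding v_def using c jJ
      by (intro divide_left_mono) (auto intro: power_increasing)
    have sub: "{i. big \<alpha> (v j) i} \<subseteq> F" unfolding F_def big_def using vJ by auto
    have eqF: "{i\<in>F. big \<alpha> (v j) i} = {i. big \<alpha> (v j) i}" using sub by auto
    have "real (Nt \<alpha> (v j)) = (\<Sum>i\<in>{i. big \<alpha> (v j) i}. real (nat (\<lfloor>4 * sig \<alpha> i / v j\<rfloor> + 1)))"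
      by (simp add: Nt_def)
    also have "\<dots> \<le> (\<Sum>i\<in>{i. big \<alpha> (v j) i}. 8 * sig \<alpha> i / v j)"
    proof (rule sum_mono)
      fix i assume "i \<in> {i. big \<alpha> (v j) i}"
      then have "1 < 4 * sig \<alpha> i / v j" using v0[of j] by (simp add: big_def)
      then have "real (nat (\<lfloor>4 * sig \<alpha> i / v j\<rfloor> + 1)) \<le> 2 * (4 * sig \<alpha> i / v j)" by (rule nat_floor_le)
      then show "real (nat (\<lfloor>4 * sig \<alpha> i / v j\<rfloor> + 1)) \<le> 8 * sig \<alpha> i / v j" by simp
    qed
    also have "\<dots> = (\<Sum>i\<in>F. if big \<alpha> (v j) i then 8 * sig \<alpha> i / v j else 0)"
      unfolding eqF[symmetric] by (rule sum.inter_filter[OF fF])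
    finally have N: "real (Nt \<alpha> (v j)) \<le> (\<Sum>i\<in>F. if big \<alpha> (v j) i then 8 * sig \<alpha> i / v j else 0)" .
    have e4: "4 * c / 2^j = 4 * v j" by (simp add: v_def)
    have vp: "v j powr p / v j = v j powr (p - 1)"
      using v0[of j] by (simp add: powr_diff powr_one)
    have "real (Nt \<alpha> (v j)) * (4 * c / 2^j) powr p
        \<le> (\<Sum>i\<in>F. if big \<alpha> (v j) i then 8 * sig \<alpha> i / v j else 0) * (4 * c / 2^j) powr p"
      using N by (rule mult_right_mono) simp
    also have "\<dots> = (\<Sum>i\<in>F. (if big \<alpha> (v j) i then 8 * sig \<alpha> i / v j else 0) * (4 powr p * v j powr p))"
      unfolding e4 using v0[of j] by (simp add: sum_distrib_right powr_mult)
    also have "\<dots> = (\<Sum>i\<in>F. 4 powr p * 8 * sig \<alpha> i * (if v j < 4 * sig \<alpha> i then v j powr (p - 1) else 0))"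
    proof (rule sum.cong[OF refl])
      fix i
      have E: "8 * sig \<alpha> i / v j * (4 powr p * v j powr p) = 4 powr p * 8 * sig \<alpha> i * (v j powr p / v j)"
        by (simp add: field_simps)
      also have "\<dots> = 4 powr p * 8 * sig \<alpha> i * v j powr (p - 1)" by (simp only: vp)
      finally have E2: "8 * sig \<alpha> i / v j * (4 powr p * v j powr p) = 4 powr p * 8 * sig \<alpha> i * v j powr (p - 1)" .
      show "(if big \<alpha> (v j) i then 8 * sig \<alpha> i / v j else 0) * (4 powr p * v j powr p) =
          4 powr p * 8 * sig \<alpha> i * (if v j < 4 * sig \<alpha> i then v j powr (p - 1) else 0)"
      proof (cases "v j < 4 * sig \<alpha> i")
        case True
        then have "big \<alpha> (v j) i" by (simp add: big_def)
        with True show ?thesis using E2 by (simp only: if_True)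
      next
        case False
        then have "\<not> big \<alpha> (v j) i" by (simp add: big_def)
        with False show ?thesis by (simp only: if_False mult_zero_left mult_zero_right)
      qed
    qed
    finally show ?thesis .
  qed
  have "(\<Sum>j<J. real (Nt \<alpha> (c/2^j)) * (4 * c / 2^j) powr p)
      \<le> (\<Sum>j<J. \<Sum>i\<in>F. 4 powr p * 8 * sig \<alpha> i * (if v j < 4 * sig \<alpha> i then v j powr (p - 1) else 0))"
  proof (rule sum_mono)
    fix j assume "j \<in> {..<J}"
    then have "j < J" by simp
    from step[OF this] show "real (Nt \<alpha> (c/2^j)) * (4 * c / 2^j) powr p
      \<le> (\<Sum>i\<in>F. 4 powr p * 8 * sig \<alpha> i * (if v j < 4 * sig \<alpha> i then v j powr (p - 1) else 0))"
      by (simp only: v_def)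
  qed
  also have "\<dots> = (\<Sum>i\<in>F. \<Sum>j<J. 4 powr p * 8 * sig \<alpha> i * (if v j < 4 * sig \<alpha> i then v j powr (p - 1) else 0))"
    by (rule sum.swap)
  also have "\<dots> \<le> (\<Sum>i\<in>F. Kc * sig \<alpha> i powr p)"
  proof (rule sum_mono)
    fix i assume iF: "i \<in> F"
    have cJ: "0 < c / 2^J" using c by simp
    have s0: "0 < sig \<alpha> i" using iF cJ unfolding F_def big_def by simp
    have "(\<Sum>j<J. 4 powr p * 8 * sig \<alpha> i * (if v j < 4 * sig \<alpha> i then v j powr (p - 1) else 0))
        = 4 powr p * 8 * sig \<alpha> i * (\<Sum>j<J. if c / 2^j < 4 * sig \<alpha> i then (c / 2^j) powr (p - 1) else 0)"
      by (simp only: sum_distrib_left v_def)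
    also have "\<dots> \<le> 4 powr p * 8 * sig \<alpha> i * ((4 * sig \<alpha> i) powr (p - 1) / (1 - (1/2) powr (p - 1)))"
      using s0 by (intro mult_left_mono geo_sum') (use c p in auto)
    also have "\<dots> = Kc * sig \<alpha> i powr p"
    proof -
      have "sig \<alpha> i * (4 * sig \<alpha> i) powr (p - 1) = 4 powr (p - 1) * sig \<alpha> i powr p"
      proof -
        have "sig \<alpha> i powr p = sig \<alpha> i powr (1 + (p - 1))" by simp
        also have "\<dots> = sig \<alpha> i * sig \<alpha> i powr (p - 1)" using powr_add[of "sig \<alpha> i" 1 "p - 1"] s0 by (simp add: powr_one)
        finally show ?thesis by (simp add: powr_mult)
      qed
      then show ?thesis unfolding Kc_def by (simp add: field_simps)
    qed
    finally show "(\<Sum>j<J. 4 powr p * 8 * sig \<alpha> i * (if v j < 4 * sig \<alpha> i then v j powr (p - 1) else 0)) \<le> Kc * sig \<alpha> i powr p" .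
  qed
  also have "\<dots> = Kc * (\<Sum>i\<in>F. sig \<alpha> i powr p)" by (simp add: sum_distrib_left)
  also have "\<dots> \<le> Kc * (\<Sum>m. sig \<alpha> m powr p)"
  proof (rule mult_left_mono)
    show "(\<Sum>i\<in>F. sig \<alpha> i powr p) \<le> (\<Sum>m. sig \<alpha> m powr p)" by (rule sum_le_suminf[OF sm fF]) simp
    have "(1/2::real) powr (p - 1) < 1" using powr_less_mono2[of "p - 1" "1/2" 1] p by simp
    then show "0 \<le> Kc" unfolding Kc_def by simp
  qed
  finally show ?thesis unfolding Kc_def .
qed

theorem theorem5p7:
  fixes p :: real
  assumes "1 < p"
  shows "\<exists>C>0. \<forall>\<alpha>\<in>l2. summable (\<lambda>m. \<bar>sig \<alpha> m\<bar> powr p) \<longrightarrow>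
           (\<forall>n. \<bar>approx_num (R_op \<alpha>) n\<bar> \<noteq> \<infinity>) \<and>
           summable (\<lambda>n. real_of_ereal (approx_num (R_op \<alpha>) n) powr p) \<and>
           (\<Sum>n. real_of_ereal (approx_num (R_op \<alpha>) n) powr p) powr (1/p)
             \<le> C * (\<Sum>m. \<bar>sig \<alpha> m\<bar> powr p) powr (1/p)"
proof -
  have p: "1 < p" by fact
  have p0: "0 < p" using p by simp
  define Kc where "Kc = 4 powr p * 8 * 4 powr (p - 1) / (1 - (1/2::real) powr (p - 1))"
  have r1: "(1/2::real) powr (p - 1) < 1" using powr_less_mono2[of "p - 1" "1/2" 1] p by simp
  have Kc0: "0 < Kc" unfolding Kc_def using r1 by simp
  show ?thesis
  proof (intro exI[of _ "Kc powr (1/p)"] conjI ballI impI)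
    show "0 < Kc powr (1/p)" using Kc0 by simp
  next
    fix \<alpha> assume a: "\<alpha> \<in> l2" and sm0: "summable (\<lambda>m. \<bar>sig \<alpha> m\<bar> powr p)"
    have absig: "\<bar>sig \<alpha> m\<bar> = sig \<alpha> m" for m using sig_nonneg[of \<alpha> m] by simp
    have sm: "summable (\<lambda>m. sig \<alpha> m powr p)" using sm0 by (simp add: absig)
    define S where "S = (\<Sum>m. sig \<alpha> m powr p)"
    have S0: "0 \<le> S" unfolding S_def by (rule suminf_nonneg[OF sm]) simp
    have sS: "sig \<alpha> i \<le> S powr (1/p)" for i
    proof -
      have "sig \<alpha> i powr p \<le> S" using sum_le_suminf[OF sm, of "{i}"] by (simp add: S_def)
      then have "(sig \<alpha> i powr p) powr (1/p) \<le> S powr (1/p)" using p0 by (intro powr_mono2) auto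
      then show ?thesis using p0 sig_nonneg[of \<alpha> i] by (simp add: powr_powr powr_one)
    qed
    define T where "T = 4 * S powr (1/p) + 1"
    define c where "c = T / 2"
    have T0: "0 < T" unfolding T_def using S0 by (simp add: add_nonneg_pos)
    have c0: "0 < c" using T0 by (simp add: c_def)
    have nb: "\<not> big \<alpha> T i" for i using sS[of i] unfolding big_def T_def by linarith
    have nobig: "{i. big \<alpha> T i} = {}" using nb by auto
    have NtT: "Nt \<alpha> T = 0" unfolding Nt_def nobig by simp
    define A where "A n = approx_num (R_op \<alpha>) n" for n
    have A0: "0 \<le> A n" for n unfolding A_def by (rule approx_num_nonneg)
    have AT: "A n \<le> ereal (2 * T)" for n
      unfolding A_def by (rule key[OF a T0]) (simp_all add: nobig NtT)
    have fin: "\<bar>A n\<bar> \<noteq> \<infinity>" for n using A0[of n] AT[of n] by (cases "A n") auto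
    define f where "f n = real_of_ereal (A n)" for n
    have f0: "0 \<le> f n" for n using A0[of n] unfolding f_def by (cases "A n") auto
    have fkey: "f n \<le> 2 * t" if "0 < t" "Nt \<alpha> t \<le> n" for t n
      unfolding f_def A_def
      by (rule real_of_ereal_le_bound[OF approx_num_nonneg key[OF a that(1) big_finite[OF p0 sm that(1)] that(2)]])
    have fT: "f n \<le> 4 * c" for n using fkey[OF T0, of n] NtT by (simp add: c_def)
    have claim: "f n powr p \<le> (\<Sum>j<J. if n < Nt \<alpha> (c/2^j) then (4 * c / 2^j) powr p else 0) + (4 * c / 2^J) powr p" for n J
    proof (induction J)
      case 0
      show ?case using fT[of n] f0[of n] p0 by (simp add: powr_mono2)
    next
      case (Suc J)
      define Q where "Q = (\<Sum>j<J. if n < Nt \<alpha> (c/2^j) then (4 * c / 2^j) powr p else 0)"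
      have Q0: "0 \<le> Q" unfolding Q_def by (rule sum_nonneg) simp
      have eq: "(\<Sum>j<Suc J. if n < Nt \<alpha> (c/2^j) then (4 * c / 2^j) powr p else 0)
          = Q + (if n < Nt \<alpha> (c/2^J) then (4 * c / 2^J) powr p else 0)" by (simp add: Q_def)
      have e2: "4 * c / 2 ^ Suc J = 2 * (c / 2^J)" by simp
      show ?case
      proof (cases "f n \<le> 2 * (c / 2^J)")
        case True
        then have "f n powr p \<le> (2 * (c / 2^J)) powr p" using f0[of n] p0 by (intro powr_mono2) auto
        moreover have "0 \<le> (if n < Nt \<alpha> (c/2^J) then (4 * c / 2^J) powr p else 0)" by simp
        ultimately show ?thesis unfolding eq e2 using Q0 by linarith
      next
        case False
        have cJ: "0 < c / 2^J" using c0 by simp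
        have "n < Nt \<alpha> (c/2^J)"
        proof (rule ccontr)
          assume "\<not> n < Nt \<alpha> (c/2^J)"
          then have "f n \<le> 2 * (c / 2^J)" using fkey[OF cJ] by simp
          then show False using False by simp
        qed
        then have "(if n < Nt \<alpha> (c/2^J) then (4 * c / 2^J) powr p else 0) = (4 * c / 2^J) powr p" by simp
        moreover have "f n powr p \<le> Q + (4 * c / 2^J) powr p" using Suc.IH by (simp add: Q_def)
        moreover have "0 \<le> (2 * (c / 2^J)) powr p" by simp
        ultimately show ?thesis unfolding eq e2 by linarith
      qed
    qed
    have partial: "(\<Sum>n<M. f n powr p) \<le> Kc * S + real M * ((4 * c) powr p / 2^J)" for M J
    proof -
      have "(\<Sum>n<M. f n powr p) \<le> (\<Sum>n<M. (\<Sum>j<J. if n < Nt \<alpha> (c/2^j) then (4 * c / 2^j) powr p else 0) + (4 * c / 2^J) powr p)"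
        by (rule sum_mono) (rule claim)
      also have "\<dots> = (\<Sum>j<J. \<Sum>n<M. if n < Nt \<alpha> (c/2^j) then (4 * c / 2^j) powr p else 0) + real M * (4 * c / 2^J) powr p"
        by (simp add: sum.distrib sum.swap[of _ "{..<M}"])
      also have "\<dots> \<le> (\<Sum>j<J. real (Nt \<alpha> (c/2^j)) * (4 * c / 2^j) powr p) + real M * ((4 * c) powr p / 2^J)"
      proof (rule add_mono)
        show "(\<Sum>j<J. \<Sum>n<M. if n < Nt \<alpha> (c/2^j) then (4 * c / 2^j) powr p else 0) \<le> (\<Sum>j<J. real (Nt \<alpha> (c/2^j)) * (4 * c / 2^j) powr p)"
          by (rule sum_mono) (rule sum_indicator_le, simp)
        have "(4 * c / 2^J) powr p = (4 * c) powr p / (2^J) powr p" by (rule powr_divide)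
        also have "\<dots> \<le> (4 * c) powr p / 2^J"
        proof (rule divide_left_mono)
          have "(2::real)^J \<ge> 1" by simp
          then have "(2^J) powr 1 \<le> (2^J :: real) powr p" using p by (intro powr_mono) auto
          then show "2^J \<le> (2^J :: real) powr p" by simp
        qed (auto simp: c0)
        finally show "real M * (4 * c / 2^J) powr p \<le> real M * ((4 * c) powr p / 2^J)" by (rule mult_left_mono) simp
      qed
      also have "\<dots> \<le> Kc * S + real M * ((4 * c) powr p / 2^J)"
        using L4[OF p sm c0, of J] by (simp add: Kc_def S_def)
      finally show ?thesis .
    qed
    have bound: "(\<Sum>n<M. f n powr p) \<le> Kc * S" for M
    proof (rule ccontr)
      assume "\<not> ?thesis"
      then have d: "0 < (\<Sum>n<M. f n powr p) - Kc * S" by simp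
      define D where "D = (\<Sum>n<M. f n powr p) - Kc * S"
      obtain J where J: "real M * (4 * c) powr p / D < 2^J" using real_arch_pow[of 2 "real M * (4 * c) powr p / D"] by auto
      have "real M * (4 * c) powr p < D * 2^J" using J d by (simp add: D_def pos_divide_less_eq mult.commute)
      then have "real M * ((4 * c) powr p / 2^J) < D" by (simp add: pos_divide_less_eq)
      then show False using partial[of M J] by (simp add: D_def)
    qed
    have sf: "summable (\<lambda>n. f n powr p)"
      by (rule summableI_nonneg_bounded[OF _ bound]) simp
    have sle: "(\<Sum>n. f n powr p) \<le> Kc * S" by (rule suminf_le_const[OF sf bound])
    have "(\<Sum>n. f n powr p) powr (1/p) \<le> (Kc * S) powr (1/p)"
      using sle p0 by (intro powr_mono2) (auto intro!: suminf_nonneg sf)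
    also have "\<dots> = Kc powr (1/p) * S powr (1/p)" by (rule powr_mult)
    finally have fin2: "(\<Sum>n. f n powr p) powr (1/p) \<le> Kc powr (1/p) * (\<Sum>m. \<bar>sig \<alpha> m\<bar> powr p) powr (1/p)"
      by (simp add: S_def absig)
    show "\<forall>n. \<bar>approx_num (R_op \<alpha>) n\<bar> \<noteq> \<infinity>" using fin by (simp add: A_def)
    show "summable (\<lambda>n. real_of_ereal (approx_num (R_op \<alpha>) n) powr p)" using sf by (simp add: f_def A_def)
    show "(\<Sum>n. real_of_ereal (approx_num (R_op \<alpha>) n) powr p) powr (1/p)
             \<le> Kc powr (1/p) * (\<Sum>m. \<bar>sig \<alpha> m\<bar> powr p) powr (1/p)" using fin2 by (simp add: f_def A_def)
  qed
qed

end
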